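(* Let $a,b,n$ be positive integers and $h(j)=aj^n+b$ for $j\ge0$, $h(j)=0$ for $j<0$. Then $\beta_d^d(h)>0$ for every integer $d\ge 1$.
   Context: For a function $h:\mathbb Z\to\mathbb Z_{\ge0}$ vanishing for all sufficiently negative arguments and integers $k\le d$, $\beta_k^d(h)=\sum_{j\le k}(-1)^{k-j}\binom{d-j}{k-j}h(j)$. *)

theory Defs
  imports Main
begin

text \<open>beta_k^d(h) = sum over j <= k of (-1)^(k-j) * binom(d-j, k-j) * h(j), for h : Z -> Z_{>=0}
  vanishing for sufficiently negative arguments. Terms with h j = 0 contribute nothing, so the sum is
  taken over the (finite, under the standing assumption) set of j <= k with h j nonzero. Since j <= k <= d,
  d - j and k - j are nonnegative, so nat is harmless.\<close>
definition beta :: "int \<Rightarrow> int \<Rightarrow> (int \<Rightarrow> int) \<Rightarrow> int" where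
  "beta k d h = (\<Sum>j\<in>{j. j \<le> k \<and> h j \<noteq> 0}.
      (-1) ^ nat (k - j) * int (nat (d - j) choose nat (k - j)) * h j)"

end

theory Submission
  imports Defs
begin

lemma alt_bound:
  fixes a b :: int and n :: nat
  assumes "a > 0" "b > 0" "n > 0"
  shows "0 < (\<Sum>j\<le>m. (-1) ^ (m - j) * (a * int j ^ n + b)) \<and>
         (\<Sum>j\<le>m. (-1) ^ (m - j) * (a * int j ^ n + b)) \<le> a * int m ^ n + b"
proof (induction m)
  case 0
  then show ?case using assms by (simp add: zero_power)
next
  case (Suc m)
  let ?f = "\<lambda>j::nat. a * int j ^ n + b"
  have eq: "(\<Sum>j\<le>Suc m. (-1) ^ (Suc m - j) * ?f j) = ?f (Suc m) - (\<Sum>j\<le>m. (-1) ^ (m - j) * ?f j)"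
  proof -
    have "(\<Sum>j\<le>m. (-1) ^ (Suc m - j) * ?f j) = (\<Sum>j\<le>m. - ((-1) ^ (m - j) * ?f j))"
      by (rule sum.cong) (auto simp: Suc_diff_le)
    then show ?thesis by (simp add: sum_negf)
  qed
  have mono: "?f m < ?f (Suc m)"
  proof -
    have "int m ^ n < int (Suc m) ^ n" using assms(3) by (intro power_strict_mono) auto
    then show ?thesis using assms(1) by simp
  qed
  show ?case using Suc.IH mono eq by linarith
qed

theorem lemma3p2:
  fixes a b d :: int and n :: nat
  assumes "a > 0" and "b > 0" and "n > 0" and "d \<ge> 1"
  shows "beta d d (\<lambda>j. if j \<ge> 0 then a * j ^ n + b else 0) > 0"
proof -
  define m where "m = nat d"
  have d: "d = int m" using assms(4) m_def by simp
  let ?h = "\<lambda>j::int. if j \<ge> 0 then a * j ^ n + b else 0"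
  have pos: "j \<ge> 0 \<Longrightarrow> a * j ^ n + b > 0" for j :: int
    using assms by (smt (verit) mult_nonneg_nonneg zero_le_power)
  have S: "{j. j \<le> d \<and> ?h j \<noteq> 0} = int ` {..m}"
  proof
    show "{j. j \<le> d \<and> ?h j \<noteq> 0} \<subseteq> int ` {..m}"
    proof
      fix j assume "j \<in> {j. j \<le> d \<and> ?h j \<noteq> 0}"
      then have "0 \<le> j" "j \<le> d" by (auto split: if_splits)
      then show "j \<in> int ` {..m}" using d
        by (auto intro!: image_eqI[where x="nat j"])
    qed
    show "int ` {..m} \<subseteq> {j. j \<le> d \<and> ?h j \<noteq> 0}"
      using d pos by (auto simp del: of_nat_le_iff) (smt (verit) of_nat_0_le_iff pos)
  qed
  have "beta d d ?h = (\<Sum>j\<in>int ` {..m}. (-1) ^ nat (d - j) * int (nat (d - j) choose nat (d - j)) * ?h j)"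
    unfolding beta_def S ..
  also have "\<dots> = (\<Sum>j\<le>m. (-1) ^ (m - j) * (a * int j ^ n + b))"
    by (subst sum.reindex) (auto simp: d nat_diff_distrib intro!: sum.cong)
  finally show ?thesis using alt_bound[OF assms(1-3), of m] by simp
qed

end
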